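(* Consider the ride-hailing model in the context and a demand vector $\bm b^C$ with $0\le b^C_i\le b_i$. Suppose $\mathcal{CV}(\bm b^C)$ has an optimal solution whose Lagrange multipliers (waiting times) $\bm w^C$ of the capacity constraints satisfy $\bm w^C=\bm 0$. Then hiding demand from CVs is never profitable: for every $\bm b'$ with $0\le b'_i\le b^C_i$ for all $i$, $\pi(\bm b')\le\pi(\bm b^C)$.
   Context: Model. There are $L$ regions $\{1,\dots,L\}$. For regions $i,j$, $b_{ij}\ge0$ is the customer rate from $i$ to $j$; $b_i=\sum_j b_{ij}$ (assumed $>0$), $q_{ij}=b_{ij}/b_i$. Travel times satisfy $t_{ij}>0$ for $i\ne j$, $t_{ii}=0$. Constants: $p>0$, $c\ge0$, $R\in(0,1)$, CV fleet mass $N>0$. For $i,\alpha$: $\tau^{dr}_{i\alpha}=t_{i\alpha}+\sum_j q_{\alpha j}t_{\alpha j}$, $r^C_{i\alpha}=p(1-R)\sum_j q_{\alpha j}t_{\alpha j}-c\tau^{dr}_{i\alpha}$, $r^{C2P}_{i\alpha}=pR\sum_j q_{\alpha j}t_{\alpha j}$. A matrix $\bm x\in\mathbb R^{L\times L}_{\ge0}$ satisfies flow balance if $\sum_j(\sum_k x_{kj})q_{ji}=\sum_\alpha x_{i\alpha}$ for all $i$. $\mathcal{CV}(\bm b^C)$: maximize $N\log\sum_{i,\alpha}r^C_{i\alpha}x_{i\alpha}-\sum_{i,\alpha}\tau^{dr}_{i\alpha}x_{i\alpha}$ over $\bm x\ge0$ satisfying flow balance and $\sum_j x_{ji}\le b^C_i$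 for all $i$. $\pi(\bm b^C)=\sum_{i,\alpha}r^{C2P}_{i\alpha}x_{i\alpha}$ for an optimal solution $\bm x$ of $\mathcal{CV}(\bm b^C)$ (the value is the same for all optimal solutions). *)

theory Defs
  imports Complex_Main
begin

(* Regions are the elements of a finite type 'r (L = CARD('r)).
   Matrices indexed by regions are functions 'r \<Rightarrow> 'r \<Rightarrow> real. *)

definition bsum :: "('r::finite \<Rightarrow> 'r \<Rightarrow> real) \<Rightarrow> 'r \<Rightarrow> real" where
  "bsum b i = (\<Sum>j\<in>UNIV. b i j)"

definition qm :: "('r::finite \<Rightarrow> 'r \<Rightarrow> real) \<Rightarrow> 'r \<Rightarrow> 'r \<Rightarrow> real" where
  "qm b i j = b i j / bsum b i"

definition tau_dr :: "('r::finite \<Rightarrow> 'r \<Rightarrow> real) \<Rightarrow> ('r \<Rightarrow> 'r \<Rightarrow> real) \<Rightarrow> 'r \<Rightarrow> 'r \<Rightarrow> real" where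
  "tau_dr b t i a = t i a + (\<Sum>j\<in>UNIV. qm b a j * t a j)"

definition rC :: "('r::finite \<Rightarrow> 'r \<Rightarrow> real) \<Rightarrow> ('r \<Rightarrow> 'r \<Rightarrow> real) \<Rightarrow> real \<Rightarrow> real \<Rightarrow> real
                  \<Rightarrow> 'r \<Rightarrow> 'r \<Rightarrow> real" where
  "rC b t p c R i a = p * (1 - R) * (\<Sum>j\<in>UNIV. qm b a j * t a j) - c * tau_dr b t i a"

definition rC2P :: "('r::finite \<Rightarrow> 'r \<Rightarrow> real) \<Rightarrow> ('r \<Rightarrow> 'r \<Rightarrow> real) \<Rightarrow> real \<Rightarrow> real
                  \<Rightarrow> 'r \<Rightarrow> 'r \<Rightarrow> real" where
  "rC2P b t p R i a = p * R * (\<Sum>j\<in>UNIV. qm b a j * t a j)"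

definition flow_balance :: "('r::finite \<Rightarrow> 'r \<Rightarrow> real) \<Rightarrow> ('r \<Rightarrow> 'r \<Rightarrow> real) \<Rightarrow> bool" where
  "flow_balance b x \<longleftrightarrow>
     (\<forall>i. (\<Sum>j\<in>UNIV. (\<Sum>k\<in>UNIV. x k j) * qm b j i) = (\<Sum>a\<in>UNIV. x i a))"

definition cv_rev :: "('r::finite \<Rightarrow> 'r \<Rightarrow> real) \<Rightarrow> ('r \<Rightarrow> 'r \<Rightarrow> real) \<Rightarrow> real \<Rightarrow> real \<Rightarrow> real
                  \<Rightarrow> ('r \<Rightarrow> 'r \<Rightarrow> real) \<Rightarrow> real" where
  "cv_rev b t p c R x = (\<Sum>i\<in>UNIV. \<Sum>a\<in>UNIV. rC b t p c R i a * x i a)"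

definition cv_time :: "('r::finite \<Rightarrow> 'r \<Rightarrow> real) \<Rightarrow> ('r \<Rightarrow> 'r \<Rightarrow> real) \<Rightarrow> ('r \<Rightarrow> 'r \<Rightarrow> real) \<Rightarrow> real" where
  "cv_time b t x = (\<Sum>i\<in>UNIV. \<Sum>a\<in>UNIV. tau_dr b t i a * x i a)"

(* feasible points of CV(bC); the log in the objective requires positive revenue *)
definition cv_feasible :: "('r::finite \<Rightarrow> 'r \<Rightarrow> real) \<Rightarrow> ('r \<Rightarrow> 'r \<Rightarrow> real) \<Rightarrow> real \<Rightarrow> real \<Rightarrow> real
                  \<Rightarrow> ('r \<Rightarrow> real) \<Rightarrow> ('r \<Rightarrow> 'r \<Rightarrow> real) \<Rightarrow> bool" where
  "cv_feasible b t p c R bC x \<longleftrightarrow>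
     (\<forall>i a. 0 \<le> x i a) \<and> flow_balance b x \<and> (\<forall>i. (\<Sum>j\<in>UNIV. x j i) \<le> bC i)
     \<and> 0 < cv_rev b t p c R x"

definition cv_obj :: "('r::finite \<Rightarrow> 'r \<Rightarrow> real) \<Rightarrow> ('r \<Rightarrow> 'r \<Rightarrow> real) \<Rightarrow> real \<Rightarrow> real \<Rightarrow> real
                  \<Rightarrow> real \<Rightarrow> ('r \<Rightarrow> 'r \<Rightarrow> real) \<Rightarrow> real" where
  "cv_obj b t p c R N x = N * ln (cv_rev b t p c R x) - cv_time b t x"

definition cv_optimal :: "('r::finite \<Rightarrow> 'r \<Rightarrow> real) \<Rightarrow> ('r \<Rightarrow> 'r \<Rightarrow> real) \<Rightarrow> real \<Rightarrow> real \<Rightarrow> real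
                  \<Rightarrow> real \<Rightarrow> ('r \<Rightarrow> real) \<Rightarrow> ('r \<Rightarrow> 'r \<Rightarrow> real) \<Rightarrow> bool" where
  "cv_optimal b t p c R N bC x \<longleftrightarrow>
     cv_feasible b t p c R bC x \<and>
     (\<forall>y. cv_feasible b t p c R bC y \<longrightarrow> cv_obj b t p c R N y \<le> cv_obj b t p c R N x)"

(* KKT / Lagrange multipliers w of the capacity constraints  \<Sum>_j x_ji \<le> bC_i  at the point x:
   w \<ge> 0, complementary slackness, and there are (sign-free) multipliers \<mu> of the
   flow-balance equalities such that the gradient of the Lagrangian w.r.t. x_{k a} is
   \<le> 0, with equality whenever x_{k a} > 0 (multipliers of x \<ge> 0). *)
definition cv_multipliers :: "('r::finite \<Rightarrow> 'r \<Rightarrow> real) \<Rightarrow> ('r \<Rightarrow> 'r \<Rightarrow> real) \<Rightarrow> real \<Rightarrow> real \<Rightarrow> real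
                  \<Rightarrow> real \<Rightarrow> ('r \<Rightarrow> real) \<Rightarrow> ('r \<Rightarrow> 'r \<Rightarrow> real) \<Rightarrow> ('r \<Rightarrow> real) \<Rightarrow> bool" where
  "cv_multipliers b t p c R N bC x w \<longleftrightarrow>
     (\<forall>i. 0 \<le> w i) \<and> (\<forall>i. w i * ((\<Sum>j\<in>UNIV. x j i) - bC i) = 0) \<and>
     (\<exists>\<mu>::'r \<Rightarrow> real. \<forall>k a.
        (let g = N * rC b t p c R k a / cv_rev b t p c R x - tau_dr b t k a
                 + (\<Sum>i\<in>UNIV. \<mu> i * (qm b a i - (if k = i then 1 else 0))) - w a
         in g \<le> 0 \<and> (0 < x k a \<longrightarrow> g = 0)))"

definition pi_val :: "('r::finite \<Rightarrow> 'r \<Rightarrow> real) \<Rightarrow> ('r \<Rightarrow> 'r \<Rightarrow> real) \<Rightarrow> real \<Rightarrow> real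
                  \<Rightarrow> ('r \<Rightarrow> 'r \<Rightarrow> real) \<Rightarrow> real" where
  "pi_val b t p R x = (\<Sum>i\<in>UNIV. \<Sum>a\<in>UNIV. rC2P b t p R i a * x i a)"

end

theory Submission
  imports Defs
begin

lemma pi_identity:
  fixes b t :: "'r::finite \<Rightarrow> 'r \<Rightarrow> real"
  shows "(1 - R) * pi_val b t p R x = R * (cv_rev b t p c R x + c * cv_time b t x)"
proof -
  have "R * (cv_rev b t p c R x + c * cv_time b t x)
      = (\<Sum>i\<in>UNIV. \<Sum>a\<in>UNIV. R * (rC b t p c R i a + c * tau_dr b t i a) * x i a)"
    unfolding cv_rev_def cv_time_def
    by (simp add: sum_distrib_left sum.distrib[symmetric] algebra_simps)
  also have "\<dots> = (\<Sum>i\<in>UNIV. \<Sum>a\<in>UNIV. (1 - R) * (rC2P b t p R i a * x i a))"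
    by (intro sum.cong refl) (simp add: rC_def rC2P_def algebra_simps)
  also have "\<dots> = (1 - R) * pi_val b t p R x"
    unfolding pi_val_def by (simp add: sum_distrib_left)
  finally show ?thesis by simp
qed

lemma mu_identity:
  fixes b :: "'r::finite \<Rightarrow> 'r \<Rightarrow> real" and y :: "'r \<Rightarrow> 'r \<Rightarrow> real"
  shows "(\<Sum>k\<in>UNIV. \<Sum>a\<in>UNIV. (\<Sum>i\<in>UNIV. \<mu> i * (qm b a i - (if k = i then 1 else 0))) * y k a)
       = (\<Sum>i\<in>UNIV. \<mu> i * ((\<Sum>j\<in>UNIV. (\<Sum>k\<in>UNIV. y k j) * qm b j i) - (\<Sum>a\<in>UNIV. y i a)))"
proof -
  have "(\<Sum>k\<in>UNIV. \<Sum>a\<in>UNIV. (\<Sum>i\<in>UNIV. \<mu> i * (qm b a i - (if k = i then 1 else 0))) * y k a)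
      = (\<Sum>k\<in>UNIV. \<Sum>a\<in>UNIV. \<Sum>i\<in>UNIV. \<mu> i * qm b a i * y k a)
        - (\<Sum>k\<in>UNIV. \<Sum>a\<in>UNIV. \<Sum>i\<in>UNIV. (if k = i then \<mu> i * y k a else 0))"
  proof -
    have pt: "(\<Sum>i\<in>UNIV. \<mu> i * (qm b a i - (if k = i then 1 else 0))) * y k a
       = (\<Sum>i\<in>UNIV. \<mu> i * qm b a i * y k a) - (\<Sum>i\<in>UNIV. (if k = i then \<mu> i * y k a else 0))"
      for k a
    proof -
      have "(\<Sum>i\<in>UNIV. \<mu> i * (qm b a i - (if k = i then 1 else 0))) * y k a
         = (\<Sum>i\<in>UNIV. \<mu> i * qm b a i * y k a - (if k = i then \<mu> i * y k a else 0))"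
        unfolding sum_distrib_right by (intro sum.cong refl) (auto simp: algebra_simps)
      thus ?thesis by (simp only: sum_subtractf)
    qed
    show ?thesis by (simp only: pt sum_subtractf)
  qed
  also have "(\<Sum>k\<in>UNIV. \<Sum>a\<in>UNIV. \<Sum>i\<in>UNIV. (if k = i then \<mu> i * y k a else 0))
      = (\<Sum>i\<in>UNIV. \<mu> i * (\<Sum>a\<in>UNIV. y i a))"
    by (simp add: sum_distrib_left)
  also have "(\<Sum>k\<in>UNIV. \<Sum>a\<in>UNIV. \<Sum>i\<in>UNIV. \<mu> i * qm b a i * y k a)
      = (\<Sum>i\<in>UNIV. \<mu> i * (\<Sum>j\<in>UNIV. (\<Sum>k\<in>UNIV. y k j) * qm b j i))"
  proof -
    have "(\<Sum>k\<in>UNIV. \<Sum>a\<in>UNIV. \<Sum>i\<in>UNIV. \<mu> i * qm b a i * y k a)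
        = (\<Sum>a\<in>UNIV. \<Sum>k\<in>UNIV. \<Sum>i\<in>UNIV. \<mu> i * qm b a i * y k a)"
      by (rule sum.swap)
    also have "\<dots> = (\<Sum>a\<in>UNIV. \<Sum>i\<in>UNIV. \<Sum>k\<in>UNIV. \<mu> i * qm b a i * y k a)"
      by (intro sum.cong refl sum.swap)
    also have "\<dots> = (\<Sum>i\<in>UNIV. \<Sum>a\<in>UNIV. \<Sum>k\<in>UNIV. \<mu> i * qm b a i * y k a)"
      by (rule sum.swap)
    also have "\<dots> = (\<Sum>i\<in>UNIV. \<mu> i * (\<Sum>j\<in>UNIV. (\<Sum>k\<in>UNIV. y k j) * qm b j i))"
      by (simp add: sum_distrib_left sum_distrib_right algebra_simps)
    finally show ?thesis .
  qed
  finally show ?thesis by (simp add: sum_subtractf right_diff_distrib)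
qed

theorem proposition3:
  fixes b t :: "'r::finite \<Rightarrow> 'r \<Rightarrow> real"
    and p c R N :: real
    and bC b' :: "'r \<Rightarrow> real"
    and x0 :: "'r \<Rightarrow> 'r \<Rightarrow> real"
  assumes b_nonneg: "\<forall>i j. 0 \<le> b i j"
    and b_pos: "\<forall>i. 0 < bsum b i"
    and t_pos: "\<forall>i j. i \<noteq> j \<longrightarrow> 0 < t i j"
    and t_diag: "\<forall>i. t i i = 0"
    and p_pos: "0 < p" and c_nonneg: "0 \<le> c" and R_pos: "0 < R" and R_lt1: "R < 1"
    and N_pos: "0 < N"
    and bC_bounds: "\<forall>i. 0 \<le> bC i \<and> bC i \<le> bsum b i"
    and x0_opt: "cv_optimal b t p c R N bC x0"
    and w_zero: "cv_multipliers b t p c R N bC x0 (\<lambda>_. 0)"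
    and b'_bounds: "\<forall>i. 0 \<le> b' i \<and> b' i \<le> bC i"
  shows "\<forall>x'. cv_optimal b t p c R N b' x' \<longrightarrow> pi_val b t p R x' \<le> pi_val b t p R x0"
proof (intro allI impI)
  fix x' assume x'_opt: "cv_optimal b t p c R N b' x'"
  define R0 where "R0 = cv_rev b t p c R x0"
  have x0f: "cv_feasible b t p c R bC x0" using x0_opt unfolding cv_optimal_def by blast
  have R0pos: "0 < R0" using x0f unfolding R0_def cv_feasible_def by blast
  obtain \<mu> where mu: "\<forall>k a. (let g = N * rC b t p c R k a / R0 - tau_dr b t k a
                 + (\<Sum>i\<in>UNIV. \<mu> i * (qm b a i - (if k = i then 1 else 0))) - 0
         in g \<le> 0 \<and> (0 < x0 k a \<longrightarrow> g = 0))"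
    using w_zero unfolding cv_multipliers_def R0_def by blast
  define g where "g k a = N * rC b t p c R k a / R0 - tau_dr b t k a
                 + (\<Sum>i\<in>UNIV. \<mu> i * (qm b a i - (if k = i then 1 else 0)))" for k a
  have gle: "g k a \<le> 0" for k a using mu unfolding g_def Let_def by simp
  have geq: "0 < x0 k a \<Longrightarrow> g k a = 0" for k a using mu unfolding g_def Let_def by simp
  have gsum: "(\<Sum>k\<in>UNIV. \<Sum>a\<in>UNIV. g k a * y k a)
      = N * cv_rev b t p c R y / R0 - cv_time b t y" if fb: "flow_balance b y" for y
  proof -
    have "(\<Sum>k\<in>UNIV. \<Sum>a\<in>UNIV. g k a * y k a)
      = (\<Sum>k\<in>UNIV. \<Sum>a\<in>UNIV. N / R0 * (rC b t p c R k a * y k a) - tau_dr b t k a * y k a)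
        + (\<Sum>k\<in>UNIV. \<Sum>a\<in>UNIV. (\<Sum>i\<in>UNIV. \<mu> i * (qm b a i - (if k = i then 1 else 0))) * y k a)"
      unfolding g_def by (simp add: sum.distrib[symmetric] algebra_simps)
    also have "(\<Sum>k\<in>UNIV. \<Sum>a\<in>UNIV. (\<Sum>i\<in>UNIV. \<mu> i * (qm b a i - (if k = i then 1 else 0))) * y k a) = 0"
      unfolding mu_identity using fb unfolding flow_balance_def by simp
    also have "(\<Sum>k\<in>UNIV. \<Sum>a\<in>UNIV. N / R0 * (rC b t p c R k a * y k a) - tau_dr b t k a * y k a)
       = N / R0 * cv_rev b t p c R y - cv_time b t y"
      unfolding cv_rev_def cv_time_def by (simp only: sum_subtractf sum_distrib_left)
    finally show ?thesis by (simp only: times_divide_eq_left add_0_right)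
  qed
  have x0fb: "flow_balance b x0" using x0f unfolding cv_feasible_def by blast
  have "(\<Sum>k\<in>UNIV. \<Sum>a\<in>UNIV. g k a * x0 k a) = 0"
  proof (intro sum.neutral ballI)
    fix k a
    show "g k a * x0 k a = 0" using geq[of k a] x0f unfolding cv_feasible_def
      by (cases "0 < x0 k a") (auto simp: order_le_less)
  qed
  hence time0: "cv_time b t x0 = N" using gsum[OF x0fb] R0pos unfolding R0_def by simp
  have x'f: "cv_feasible b t p c R b' x'" using x'_opt unfolding cv_optimal_def by blast
  have x'fb: "flow_balance b x'" and x'nn: "\<forall>i a. 0 \<le> x' i a"
    and rev'pos: "0 < cv_rev b t p c R x'"
    using x'f unfolding cv_feasible_def by blast+
  have "(\<Sum>k\<in>UNIV. \<Sum>a\<in>UNIV. g k a * x' k a) \<le> 0"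
    by (intro sum_nonpos) (simp add: mult_nonpos_nonneg gle x'nn)
  hence rev_le: "N * cv_rev b t p c R x' / R0 \<le> cv_time b t x'"
    using gsum[OF x'fb] by simp
  have time'_le: "cv_time b t x' \<le> N"
  proof (rule ccontr)
    assume "\<not> cv_time b t x' \<le> N"
    hence T: "N < cv_time b t x'" by simp
    define T where "T = cv_time b t x'"
    define s where "s = N / T"
    have Tpos: "0 < T" using T N_pos unfolding T_def by simp
    have s0: "0 < s" and s1: "s < 1" using T N_pos Tpos unfolding s_def T_def by auto
    define y where "y i a = s * x' i a" for i a
    have revy: "cv_rev b t p c R y = s * cv_rev b t p c R x'"
      unfolding cv_rev_def y_def by (simp add: sum_distrib_left algebra_simps)
    have timey: "cv_time b t y = s * cv_time b t x'"
      unfolding cv_time_def y_def by (simp add: sum_distrib_left algebra_simps)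
    have "cv_feasible b t p c R b' y"
      unfolding cv_feasible_def
    proof (intro conjI allI)
      fix i a show "0 \<le> y i a" using x'nn s0 unfolding y_def by simp
    next
      show "flow_balance b y" using x'fb unfolding flow_balance_def y_def
        by (simp add: sum_distrib_left[symmetric] algebra_simps)
    next
      fix i
      have "(\<Sum>j\<in>UNIV. y j i) = s * (\<Sum>j\<in>UNIV. x' j i)"
        unfolding y_def by (simp add: sum_distrib_left)
      also have "\<dots> \<le> (\<Sum>j\<in>UNIV. x' j i)"
        using s1 s0 x'nn by (simp add: mult_left_le_one_le sum_nonneg)
      also have "\<dots> \<le> b' i" using x'f unfolding cv_feasible_def by blast
      finally show "(\<Sum>j\<in>UNIV. y j i) \<le> b' i" .
    next
      show "0 < cv_rev b t p c R y" using revy s0 rev'pos by simp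
    qed
    hence "cv_obj b t p c R N y \<le> cv_obj b t p c R N x'"
      using x'_opt unfolding cv_optimal_def by blast
    hence "N * ln s + N * ln (cv_rev b t p c R x') - s * T \<le> N * ln (cv_rev b t p c R x') - T"
      unfolding cv_obj_def revy timey T_def using s0 rev'pos by (simp add: ln_mult algebra_simps)
    hence A: "N * ln s \<le> (s - 1) * T" by (simp add: algebra_simps)
    have "(s - 1) * T = N - T" using Tpos unfolding s_def by (simp add: field_simps)
    moreover have lnl: "ln (T / N) < T / N - 1"
      using ln_add_one_self_less_self[of "T / N - 1"] T N_pos unfolding T_def by simp
    moreover have "N * ln (T / N) < N * (T / N - 1)"
      using mult_strict_left_mono[OF lnl N_pos] .
    moreover have "ln s = - ln (T / N)" unfolding s_def using Tpos N_pos
      by (simp add: ln_div)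
    moreover have "N * (T / N - 1) = T - N" using N_pos by (simp add: field_simps)
    moreover have "N * ln s = - (N * ln (T / N))" using \<open>ln s = - ln (T / N)\<close> by simp
    ultimately have "N * ln s > (s - 1) * T"
      by linarith
    with A show False by simp
  qed
  have rev'_le: "cv_rev b t p c R x' \<le> R0"
  proof -
    have "N * cv_rev b t p c R x' / R0 \<le> N" using rev_le time'_le by simp
    hence "N * cv_rev b t p c R x' \<le> N * R0" using R0pos by (simp add: field_simps)
    thus ?thesis using N_pos by simp
  qed
  have "(1 - R) * pi_val b t p R x' \<le> (1 - R) * pi_val b t p R x0"
    unfolding pi_identity[where c = c]
    using rev'_le time'_le time0 R_pos c_nonneg unfolding R0_def
    by (intro mult_left_mono) (auto intro: add_mono mult_left_mono)
  thus "pi_val b t p R x' \<le> pi_val b t p R x0" using R_lt1 by simp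
qed

end
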